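(* Fix $k\ge0$. For each $N\ge k$, let $\varphi_N\subseteq\{1,\dots,N\}^2$ be a deterministic scattered set of cardinality $k$, i.e. its $k$ elements lie in pairwise distinct rows and pairwise distinct columns. Let $X^{N\times N}$ have i.i.d. Bernoulli$(q)$ entries, $0<q<1$. Define the SP rate $$\alpha_{sp}^N(\varphi_N)=\frac1{N^2}\sum_{m=1}^N\sum_{n=1}^N\bigvee_{(i,j)\in\varphi_N}X_{m,j}X_{i,j}X_{i,n},$$ where $\bigvee$ is the logical OR. Let $K'_N=|\{(i,j)\in\varphi_N: X_{i,j}=1\}|$; thus $K'_N\sim\mathrm{Binomial}(k,q)$. Then $$\alpha_{sp}^N(\varphi_N)-\bigl(1-(1-q^2)^{K'_N}\bigr)\to0$$ in probability as $N\to\infty$. Equivalently, $\alpha_{sp}^N(\varphi_N)$ converges to a random variable $\alpha_k$ whose law is $$P_{\alpha_k}(x)=\sum_{k'=0}^k\binom{k}{k'}q^{k'}(1-q)^{k-k'}\,\delta\bigl[x-1+(1-q^2)^{k'}\bigr].$$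
   Context: $\delta$ denotes the Dirac delta. $\bigvee$ over an empty index set is $0$. *)

theory Defs
  imports "HOL-Probability.Probability"
begin

text \<open>Law of an N x N matrix with i.i.d. Bernoulli(q) entries, indexed by {1..N} x {1..N};
  entry X (i,j) = True means X_{i,j} = 1. Outside the index range the value is False.\<close>
definition bern_matrix :: "real \<Rightarrow> nat \<Rightarrow> (nat \<times> nat \<Rightarrow> bool) pmf" where
  "bern_matrix q N = Pi_pmf ({1..N} \<times> {1..N}) False (\<lambda>_. bernoulli_pmf q)"

definition scattered :: "(nat \<times> nat) set \<Rightarrow> bool" where
  "scattered S \<longleftrightarrow> (\<forall>i j i' j'. (i,j) \<in> S \<longrightarrow> (i',j') \<in> S \<longrightarrow> (i,j) \<noteq> (i',j') \<longrightarrow> i \<noteq> i' \<and> j \<noteq> j')"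

text \<open>SP rate; the OR over an empty index set is 0 (empty existential is False).\<close>
definition sp_rate :: "nat \<Rightarrow> (nat \<times> nat) set \<Rightarrow> (nat \<times> nat \<Rightarrow> bool) \<Rightarrow> real" where
  "sp_rate N phi X = (1 / (real N)^2) *
     (\<Sum>m=1..N. \<Sum>n=1..N. (if (\<exists>(i,j)\<in>phi. X (m,j) \<and> X (i,j) \<and> X (i,n)) then 1 else 0))"

definition K' :: "(nat \<times> nat) set \<Rightarrow> (nat \<times> nat \<Rightarrow> bool) \<Rightarrow> nat" where
  "K' phi X = card {(i,j) \<in> phi. X (i,j)}"

end

theory Submission
  imports Defs
begin


definition dep :: "(('a \<Rightarrow> bool) \<Rightarrow> real) \<Rightarrow> 'a set \<Rightarrow> bool" where
  "dep g T \<longleftrightarrow> (\<forall>X Y. (\<forall>x\<in>T. X x = Y x) \<longrightarrow> g X = g Y)"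

lemma depD: "dep g T \<Longrightarrow> (\<And>x. x \<in> T \<Longrightarrow> X x = Y x) \<Longrightarrow> g X = g Y"
  by (simp add: dep_def)

lemma dep_mono: "dep g T \<Longrightarrow> T \<subseteq> T' \<Longrightarrow> dep g T'"
  unfolding dep_def by blast

lemma finite_set_Pi_pmf_bool:
  assumes "finite S" shows "finite (set_pmf (Pi_pmf S d (p :: 'a \<Rightarrow> bool pmf)))"
  by (rule finite_subset[OF set_Pi_pmf_subset'[OF assms]]) (intro finite_PiE_dflt assms, simp)

lemma integrable_Pi_bool:
  fixes f :: "('a \<Rightarrow> bool) \<Rightarrow> real"
  assumes "finite S" shows "integrable (measure_pmf (Pi_pmf S d p)) f"
  by (intro integrable_measure_pmf_finite finite_set_Pi_pmf_bool assms)

lemma E_restrict: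
  assumes "finite S" "T \<subseteq> S" "dep g T"
  shows "measure_pmf.expectation (Pi_pmf S d p) g = measure_pmf.expectation (Pi_pmf T d p) g"
proof -
  have "Pi_pmf T d p = map_pmf (\<lambda>f x. if x \<in> T then f x else d) (Pi_pmf S d p)"
    by (rule Pi_pmf_subset) (use assms in auto)
  moreover have "(\<lambda>f. g (\<lambda>x. if x \<in> T then f x else d)) = g"
    by (intro ext depD[OF assms(3)]) simp
  ultimately show ?thesis by simp
qed

lemma E_pair_prod:
  fixes h1 :: "'a \<Rightarrow> real" and h2 :: "'b \<Rightarrow> real"
  assumes "finite (set_pmf P)" "finite (set_pmf Q)"
  shows "measure_pmf.expectation (pair_pmf P Q) (\<lambda>z. h1 (fst z) * h2 (snd z))
       = measure_pmf.expectation P h1 * measure_pmf.expectation Q h2"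
proof -
  have "measure_pmf.expectation (pair_pmf P Q) (\<lambda>z. h1 (fst z) * h2 (snd z))
     = (\<Sum>z\<in>set_pmf P \<times> set_pmf Q. (\<lambda>z. h1 (fst z) * h2 (snd z)) z * pmf (pair_pmf P Q) z)"
    by (rule integral_measure_pmf_real) (use assms in auto)
  also have "\<dots> = (\<Sum>x\<in>set_pmf P. \<Sum>y\<in>set_pmf Q. (h1 x * pmf P x) * (h2 y * pmf Q y))"
    unfolding sum.cartesian_product by (intro sum.cong refl) (auto simp: pmf_pair algebra_simps)
  also have "\<dots> = (\<Sum>x\<in>set_pmf P. h1 x * pmf P x) * (\<Sum>y\<in>set_pmf Q. h2 y * pmf Q y)"
    by (simp add: sum_product)
  also have "\<dots> = measure_pmf.expectation P h1 * measure_pmf.expectation Q h2"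
    using assms by (simp add: integral_measure_pmf_real)
  finally show ?thesis .
qed

lemma E_prod_disjoint:
  fixes g :: "'i \<Rightarrow> ('a \<Rightarrow> bool) \<Rightarrow> real"
  assumes "finite A"
  shows "finite S \<Longrightarrow> (\<forall>a\<in>A. T a \<subseteq> S) \<Longrightarrow> disjoint_family_on T A \<Longrightarrow> (\<forall>a\<in>A. dep (g a) (T a)) \<Longrightarrow>
    measure_pmf.expectation (Pi_pmf S d p) (\<lambda>X. \<Prod>a\<in>A. g a X)
    = (\<Prod>a\<in>A. measure_pmf.expectation (Pi_pmf S d p) (g a))"
  using assms
proof (induction A arbitrary: S rule: finite_induct)
  case empty
  then show ?case by simp
next
  case (insert a A)
  define U where "U = T a"
  define S' where "S' = S - U"
  have fU: "finite U" "finite S'" using insert.prems unfolding U_def S'_def by (auto intro: finite_subset)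
  have SU: "S = U \<union> S'" "U \<inter> S' = {}" using insert.prems unfolding U_def S'_def by auto
  have TbS': "\<forall>b\<in>A. T b \<subseteq> S'"
    using insert.prems insert.hyps unfolding S'_def U_def disjoint_family_on_def by fastforce
  have dA: "disjoint_family_on T A" using insert.prems unfolding disjoint_family_on_def by auto
  have depA: "\<forall>b\<in>A. dep (g b) (T b)" using insert.prems by auto
  have da: "dep (g a) U" using insert.prems unfolding U_def by auto
  have IH: "measure_pmf.expectation (Pi_pmf S' d p) (\<lambda>X. \<Prod>b\<in>A. g b X)
    = (\<Prod>b\<in>A. measure_pmf.expectation (Pi_pmf S' d p) (g b))"
    using insert.IH[OF fU(2) TbS' dA depA] .
  have eq: "(\<Prod>b\<in>insert a A. g b (\<lambda>x. if x \<in> U then f x else h x))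
      = g a f * (\<Prod>b\<in>A. g b h)" for f h
  proof -
    have "g a (\<lambda>x. if x \<in> U then f x else h x) = g a f"
      by (rule depD[OF da]) simp
    moreover have "g b (\<lambda>x. if x \<in> U then f x else h x) = g b h" if "b \<in> A" for b
    proof -
      have "\<forall>x\<in>T b. x \<notin> U" using TbS' that SU by blast
      then show ?thesis by (intro depD[of "g b" "T b"]) (use depA that in auto)
    qed
    ultimately show "(\<Prod>b\<in>insert a A. g b (\<lambda>x. if x \<in> U then f x else h x)) = g a f * (\<Prod>b\<in>A. g b h)"
      using insert.hyps by simp
  qed
  have "measure_pmf.expectation (Pi_pmf S d p) (\<lambda>X. \<Prod>b\<in>insert a A. g b X)
     = measure_pmf.expectation (map_pmf (\<lambda>(f,h) x. if x \<in> U then f x else h x)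
          (pair_pmf (Pi_pmf U d p) (Pi_pmf S' d p))) (\<lambda>X. \<Prod>b\<in>insert a A. g b X)"
    using Pi_pmf_union[OF fU SU(2), of d p] SU(1) by simp
  also have "\<dots> = measure_pmf.expectation (pair_pmf (Pi_pmf U d p) (Pi_pmf S' d p))
       (\<lambda>z. g a (fst z) * (\<Prod>b\<in>A. g b (snd z)))"
    by (subst integral_map_pmf) (simp only: case_prod_beta eq)
  also have "\<dots> = measure_pmf.expectation (Pi_pmf U d p) (g a) *
       measure_pmf.expectation (Pi_pmf S' d p) (\<lambda>X. \<Prod>b\<in>A. g b X)"
    by (rule E_pair_prod) (intro finite_set_Pi_pmf_bool fU)+
  also have "measure_pmf.expectation (Pi_pmf U d p) (g a) = measure_pmf.expectation (Pi_pmf S d p) (g a)"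
    by (rule E_restrict[symmetric]) (use insert.prems da SU in auto)
  also have "measure_pmf.expectation (Pi_pmf S' d p) (\<lambda>X. \<Prod>b\<in>A. g b X) = (\<Prod>b\<in>A. measure_pmf.expectation (Pi_pmf S d p) (g b))"
    unfolding IH by (intro prod.cong refl E_restrict[symmetric]) (use insert.prems TbS' depA SU in \<open>auto intro: dep_mono\<close>)
  finally show ?case using insert.hyps by simp
qed




lemma E_coord_fun:
  fixes h :: "'b \<Rightarrow> real"
  assumes "finite S" "a \<in> S"
  shows "measure_pmf.expectation (Pi_pmf S d p) (\<lambda>X. h (X a)) = measure_pmf.expectation (p a) h"
proof -
  have "measure_pmf.expectation (Pi_pmf S d p) (\<lambda>X. h (X a))
      = measure_pmf.expectation (map_pmf (\<lambda>f. f a) (Pi_pmf S d p)) h" by simp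
  also have "map_pmf (\<lambda>f. f a) (Pi_pmf S d p) = p a" using assms by (simp add: Pi_pmf_component)
  finally show ?thesis .
qed

lemma E_bern_of_bool:
  assumes "0 \<le> q" "q \<le> 1"
  shows "measure_pmf.expectation (bernoulli_pmf q) (\<lambda>b. of_bool b) = (q::real)"
  using assms by (subst integral_measure_pmf_real[where A=UNIV]) (auto simp: UNIV_bool)

lemma E_mono:
  assumes "finite S" "T \<subseteq> S" "0 \<le> q" "q \<le> 1"
  shows "measure_pmf.expectation (Pi_pmf S False (\<lambda>_. bernoulli_pmf q)) (\<lambda>X. \<Prod>x\<in>T. of_bool (X x)) = q ^ card T"
proof -
  have fT: "finite T" using assms finite_subset by blast
 have "measure_pmf.expectation (Pi_pmf S False (\<lambda>_. bernoulli_pmf q)) (\<lambda>X. \<Prod>x\<in>T. (of_bool (X x) :: real))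
     = (\<Prod>x\<in>T. measure_pmf.expectation (Pi_pmf S False (\<lambda>_. bernoulli_pmf q)) (\<lambda>X. of_bool (X x)))"
    by (rule E_prod_disjoint[where T="\<lambda>x. {x}" and g="\<lambda>x X. of_bool (X x)" and A=T and S=S]) (use assms fT in \<open>auto simp: disjoint_family_on_def dep_def\<close>)
  also have "\<dots> = (\<Prod>x\<in>T. q)"
    by (intro prod.cong refl) (use assms in \<open>auto simp: E_coord_fun[where h="\<lambda>b. of_bool b"] E_bern_of_bool\<close>)
  finally show ?thesis by simp
qed

definition fP :: "real \<Rightarrow> (nat\<times>nat \<Rightarrow> bool) \<Rightarrow> nat\<times>nat \<Rightarrow> real" where
  "fP q X a = (if X a then 1 - q^2 else 1)"
definition fQ :: "nat \<Rightarrow> nat \<Rightarrow> (nat\<times>nat \<Rightarrow> bool) \<Rightarrow> nat\<times>nat \<Rightarrow> real" where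
  "fQ m n X a = 1 - of_bool (X (m, snd a) \<and> X a \<and> X (fst a, n))"

context
  fixes q :: real and S :: "(nat\<times>nat) set" and i j m n m' n' :: nat
  assumes q: "0 \<le> q" "q \<le> 1" and fS: "finite S"
    and inS: "(i,j) \<in> S" "(m,j) \<in> S" "(i,n) \<in> S" "(m',j) \<in> S" "(i,n') \<in> S"
    and dd: "i \<noteq> m" "i \<noteq> m'" "j \<noteq> n" "j \<noteq> n'" "m \<noteq> m'" "n \<noteq> n'"
begin

private abbreviation "M \<equiv> Pi_pmf S False (\<lambda>_. bernoulli_pmf q)"
private abbreviation "b X y \<equiv> (of_bool (X y) :: real)"

private lemma integ[simp]: "integrable (measure_pmf M) (f :: _ \<Rightarrow> real)"
  by (rule integrable_Pi_bool[OF fS])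

private lemma E1: "measure_pmf.expectation M (\<lambda>X. b X (i,j)) = q"
  using E_mono[OF fS _ q, of "{(i,j)}"] inS by simp

private lemma E3: "measure_pmf.expectation M (\<lambda>X. b X (m,j) * b X (i,j) * b X (i,n)) = q^3"
proof -
  have "(\<lambda>X. b X (m,j) * b X (i,j) * b X (i,n)) = (\<lambda>X. \<Prod>x\<in>{(m,j),(i,j),(i,n)}. b X x)"
    using dd by (auto simp: fun_eq_iff)
  moreover have "card {(m,j),(i,j),(i,n)} = 3" using dd by auto
  ultimately show ?thesis using E_mono[OF fS _ q, of "{(m,j),(i,j),(i,n)}"] inS by simp
qed

private lemma E3': "measure_pmf.expectation M (\<lambda>X. b X (m',j) * b X (i,j) * b X (i,n')) = q^3"
proof -
  have "(\<lambda>X. b X (m',j) * b X (i,j) * b X (i,n')) = (\<lambda>X. \<Prod>x\<in>{(m',j),(i,j),(i,n')}. b X x)"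
    using dd by (auto simp: fun_eq_iff)
  moreover have "card {(m',j),(i,j),(i,n')} = 3" using dd by auto
  ultimately show ?thesis using E_mono[OF fS _ q, of "{(m',j),(i,j),(i,n')}"] inS by simp
qed

private lemma E5: "measure_pmf.expectation M (\<lambda>X. b X (m,j) * b X (i,j) * b X (i,n) * b X (m',j) * b X (i,n')) = q^5"
proof -
  have "(\<lambda>X. b X (m,j) * b X (i,j) * b X (i,n) * b X (m',j) * b X (i,n')) = (\<lambda>X. \<Prod>x\<in>{(m,j),(i,j),(i,n),(m',j),(i,n')}. b X x)"
    using dd by (auto simp: fun_eq_iff)
  moreover have "card {(m,j),(i,j),(i,n),(m',j),(i,n')} = 5" using dd by auto
  ultimately show ?thesis using E_mono[OF fS _ q, of "{(m,j),(i,j),(i,n),(m',j),(i,n')}"] inS by simp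
qed

lemma E_PP: "measure_pmf.expectation M (\<lambda>X. fP q X (i,j) * fP q X (i,j)) = 1 - 2*q^3 + q^5"
proof -
  have "(\<lambda>X. fP q X (i,j) * fP q X (i,j)) = (\<lambda>X. 1 + (q^4 - 2*q^2) * b X (i,j))"
    by (auto simp: fun_eq_iff fP_def algebra_simps power2_eq_square power4_eq_xxxx)
  then show ?thesis using E1 by (simp add: algebra_simps power2_eq_square power3_eq_cube power4_eq_xxxx numeral_eq_Suc)
qed

lemma E_PQ: "measure_pmf.expectation M (\<lambda>X. fP q X (i,j) * fQ m' n' X (i,j)) = 1 - 2*q^3 + q^5"
proof -
  have "(\<lambda>X. fP q X (i,j) * fQ m' n' X (i,j)) = (\<lambda>X. 1 - q^2 * b X (i,j) - b X (m',j) * b X (i,j) * b X (i,n') + q^2 * (b X (m',j) * b X (i,j) * b X (i,n')))"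
    by (auto simp: fun_eq_iff fP_def fQ_def algebra_simps)
  then show ?thesis using E1 E3' by (simp add: algebra_simps power2_eq_square power3_eq_cube numeral_eq_Suc)
qed

lemma E_QP: "measure_pmf.expectation M (\<lambda>X. fQ m n X (i,j) * fP q X (i,j)) = 1 - 2*q^3 + q^5"
proof -
  have "(\<lambda>X. fQ m n X (i,j) * fP q X (i,j)) = (\<lambda>X. 1 - q^2 * b X (i,j) - b X (m,j) * b X (i,j) * b X (i,n) + q^2 * (b X (m,j) * b X (i,j) * b X (i,n)))"
    by (auto simp: fun_eq_iff fP_def fQ_def algebra_simps)
  then show ?thesis using E1 E3 by (simp add: algebra_simps power2_eq_square power3_eq_cube numeral_eq_Suc)
qed

lemma E_QQ: "measure_pmf.expectation M (\<lambda>X. fQ m n X (i,j) * fQ m' n' X (i,j)) = 1 - 2*q^3 + q^5"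
proof -
  have "(\<lambda>X. fQ m n X (i,j) * fQ m' n' X (i,j)) = (\<lambda>X. 1 - b X (m,j) * b X (i,j) * b X (i,n) - b X (m',j) * b X (i,j) * b X (i,n') + b X (m,j) * b X (i,j) * b X (i,n) * b X (m',j) * b X (i,n'))"
    by (auto simp: fun_eq_iff fQ_def)
  then show ?thesis using E3 E3' E5 by (simp add: algebra_simps power2_eq_square power3_eq_cube numeral_eq_Suc)
qed

end



definition Ind :: "(nat\<times>nat) set \<Rightarrow> nat \<Rightarrow> nat \<Rightarrow> (nat\<times>nat \<Rightarrow> bool) \<Rightarrow> real" where
  "Ind A m n X = (if (\<exists>(i,j)\<in>A. X (m,j) \<and> X (i,j) \<and> X (i,n)) then 1 else 0)"

definition Zf :: "real \<Rightarrow> (nat\<times>nat) set \<Rightarrow> (nat\<times>nat \<Rightarrow> bool) \<Rightarrow> real" where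
  "Zf q A X = 1 - (1 - q^2) ^ K' A X"

lemma Z_prod:
  assumes "finite A"
  shows "Zf q A X = 1 - (\<Prod>a\<in>A. fP q X a)"
proof -
  have "(\<Prod>a\<in>A. fP q X a) = (\<Prod>a\<in>A \<inter> {a. X a}. 1 - q^2) * (\<Prod>a\<in>A \<inter> - {a. X a}. 1)"
    unfolding fP_def using assms by (rule prod.If_cases)
  also have "\<dots> = (1 - q^2) ^ card (A \<inter> {a. X a})" by simp
  also have "A \<inter> {a. X a} = {(i,j)\<in>A. X (i,j)}" by auto
  finally show ?thesis by (simp add: Zf_def K'_def)
qed

lemma Ind_prod:
  assumes "finite A"
  shows "Ind A m n X = 1 - (\<Prod>a\<in>A. fQ m n X a)"
proof (cases "\<exists>(i,j)\<in>A. X (m,j) \<and> X (i,j) \<and> X (i,n)")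
  case True
  then obtain a where "a \<in> A" "fQ m n X a = 0" by (auto simp: fQ_def)
  then have "(\<Prod>a\<in>A. fQ m n X a) = 0" using assms by (metis prod_zero_iff)
  then show ?thesis using True by (simp add: Ind_def)
next
  case False
  then have "(\<Prod>a\<in>A. fQ m n X a) = 1" by (intro prod.neutral) (auto simp: fQ_def)
  then show ?thesis using False by (simp add: Ind_def)
qed

lemma good_zero:
  fixes A :: "(nat\<times>nat) set"
  assumes q: "0 \<le> q" "q \<le> 1" and AS: "A \<subseteq> {1..N} \<times> {1..N}" and sc: "scattered A"
    and mn: "m \<in> {1..N}" "m' \<in> {1..N}" "n \<in> {1..N}" "n' \<in> {1..N}"
    and nR: "m \<notin> fst ` A" "m' \<notin> fst ` A" and nC: "n \<notin> snd ` A" "n' \<notin> snd ` A"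
    and dd: "m \<noteq> m'" "n \<noteq> n'"
  shows "measure_pmf.expectation (bern_matrix q N)
     (\<lambda>X. (Ind A m n X - Zf q A X) * (Ind A m' n' X - Zf q A X)) = 0"
proof -
  define S where "S = {1..N} \<times> {1..N}"
  have fS: "finite S" by (simp add: S_def)
  have fA: "finite A" using AS finite_subset by (metis finite_SigmaI finite_atLeastAtMost)
  have integ[simp]: "integrable (measure_pmf (Pi_pmf S False (\<lambda>_. bernoulli_pmf q))) (f :: _ \<Rightarrow> real)" for f
    by (rule integrable_Pi_bool[OF fS])
  define T where "T a = {a, (m, snd a), (fst a, n), (m', snd a), (fst a, n')}" for a :: "nat\<times>nat"
  have ij: "i \<noteq> m \<and> i \<noteq> m' \<and> j \<noteq> n \<and> j \<noteq> n' \<and> i \<in> {1..N} \<and> j \<in> {1..N}" if "(i,j) \<in> A" for i j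
    using that nR nC AS by (force simp: image_iff)
  have TS: "\<forall>a\<in>A. T a \<subseteq> S"
    using ij mn by (auto simp: T_def S_def)
  have disj: "disjoint_family_on T A"
    unfolding disjoint_family_on_def
  proof (intro ballI impI)
    fix a b assume ab: "a \<in> A" "b \<in> A" "a \<noteq> b"
    obtain i j i' j' where a: "a = (i,j)" and b: "b = (i',j')" by (cases a, cases b)
    have "i \<noteq> i'" "j \<noteq> j'" using sc ab unfolding scattered_def a b by blast+
    moreover have "i \<noteq> m \<and> i \<noteq> m' \<and> j \<noteq> n \<and> j \<noteq> n'" "i' \<noteq> m \<and> i' \<noteq> m' \<and> j' \<noteq> n \<and> j' \<noteq> n'"
      using ij ab a b by auto
    ultimately show "T a \<inter> T b = {}" unfolding T_def a b by auto
  qed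
  define c where "c = 1 - 2*q^3 + q^5"
  have gen: "measure_pmf.expectation (Pi_pmf S False (\<lambda>_. bernoulli_pmf q)) (\<lambda>X. \<Prod>a\<in>A. G X a) = c ^ card A"
    if h1': "\<And>i j. (i,j) \<in> A \<Longrightarrow> measure_pmf.expectation (Pi_pmf S False (\<lambda>_. bernoulli_pmf q)) (\<lambda>X. G X (i,j)) = c"
    and h2': "\<And>i j. (i,j) \<in> A \<Longrightarrow> dep (\<lambda>X. G X (i,j)) (T (i,j))" for G
  proof -
    have h1: "measure_pmf.expectation (Pi_pmf S False (\<lambda>_. bernoulli_pmf q)) (\<lambda>X. G X a) = c" if "a \<in> A" for a
      using h1' that by (cases a) auto
    have h2: "dep (\<lambda>X. G X a) (T a)" if "a \<in> A" for a
      using h2' that by (cases a) auto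
    have "measure_pmf.expectation (Pi_pmf S False (\<lambda>_. bernoulli_pmf q)) (\<lambda>X. \<Prod>a\<in>A. G X a)
      = (\<Prod>a\<in>A. measure_pmf.expectation (Pi_pmf S False (\<lambda>_. bernoulli_pmf q)) (\<lambda>X. G X a))"
      by (rule E_prod_disjoint[where T=T and g="\<lambda>a X. G X a" and A=A and S=S]) (use fA fS TS disj h2 in auto)
    also have "\<dots> = (\<Prod>a\<in>A. c)" by (intro prod.cong refl h1)
    finally show ?thesis by simp
  qed
  have inS: "(i,j) \<in> S" "(m,j) \<in> S" "(i,n) \<in> S" "(m',j) \<in> S" "(i,n') \<in> S" if "(i,j) \<in> A" for i j
    using ij[OF that] mn by (auto simp: S_def)
  have dd': "i \<noteq> m" "i \<noteq> m'" "j \<noteq> n" "j \<noteq> n'" if "(i,j) \<in> A" for i j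
    using ij[OF that] by auto
  have PP: "measure_pmf.expectation (Pi_pmf S False (\<lambda>_. bernoulli_pmf q)) (\<lambda>X. \<Prod>a\<in>A. fP q X a * fP q X a) = c ^ card A"
    by (rule gen) (simp only: c_def E_PP[OF q fS inS dd' dd], auto simp: T_def dep_def fP_def)
  have PQ: "measure_pmf.expectation (Pi_pmf S False (\<lambda>_. bernoulli_pmf q)) (\<lambda>X. \<Prod>a\<in>A. fP q X a * fQ m' n' X a) = c ^ card A"
    by (rule gen) (simp only: c_def E_PQ[OF q fS inS dd' dd], auto simp: T_def dep_def fP_def fQ_def)
  have QP: "measure_pmf.expectation (Pi_pmf S False (\<lambda>_. bernoulli_pmf q)) (\<lambda>X. \<Prod>a\<in>A. fQ m n X a * fP q X a) = c ^ card A"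
    by (rule gen) (simp only: c_def E_QP[OF q fS inS dd' dd], auto simp: T_def dep_def fP_def fQ_def)
  have QQ: "measure_pmf.expectation (Pi_pmf S False (\<lambda>_. bernoulli_pmf q)) (\<lambda>X. \<Prod>a\<in>A. fQ m n X a * fQ m' n' X a) = c ^ card A"
    by (rule gen) (simp only: c_def E_QQ[OF q fS inS dd' dd], auto simp: T_def dep_def fQ_def)
  have eq: "(\<lambda>X. (Ind A m n X - Zf q A X) * (Ind A m' n' X - Zf q A X))
    = (\<lambda>X. (\<Prod>a\<in>A. fP q X a * fP q X a) - (\<Prod>a\<in>A. fP q X a * fQ m' n' X a)
          - (\<Prod>a\<in>A. fQ m n X a * fP q X a) + (\<Prod>a\<in>A. fQ m n X a * fQ m' n' X a))"
    by (simp add: fun_eq_iff Ind_prod[OF fA] Z_prod[OF fA] prod.distrib algebra_simps)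
  show ?thesis
    unfolding bern_matrix_def S_def[symmetric] eq
    by (simp add: PP PQ QP QQ)
qed




lemma part1:
  assumes q: "0 \<le> q" "q \<le> 1" and AS: "A \<subseteq> {1..N} \<times> {1..N}" and cA: "card A = k"
  shows "map_pmf (K' A) (bern_matrix q N) = binomial_pmf k q"
proof -
  have fA: "finite A" using AS finite_subset by (metis finite_SigmaI finite_atLeastAtMost)
  have "binomial_pmf k q = map_pmf (\<lambda>f. card {x\<in>A. f x}) (Pi_pmf A False (\<lambda>_. bernoulli_pmf q))"
    by (rule binomial_pmf_altdef') (use fA cA q in auto)
  also have "Pi_pmf A False (\<lambda>_. bernoulli_pmf q) = map_pmf (\<lambda>f x. if x \<in> A then f x else False) (bern_matrix q N)"
    unfolding bern_matrix_def by (rule Pi_pmf_subset) (use AS in auto)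
  also have "map_pmf (\<lambda>f. card {x\<in>A. f x}) \<dots> = map_pmf (K' A) (bern_matrix q N)"
    unfolding map_pmf_comp by (intro map_pmf_cong refl) (auto simp: K'_def intro!: arg_cong[where f=card])
  finally show ?thesis ..
qed

lemma card_Un_le': "card A \<le> a \<Longrightarrow> card B \<le> b \<Longrightarrow> card (A \<union> B) \<le> a + b"
  by (meson add_mono card_Un_le order_trans)

lemma card_bad:
  fixes R C :: "nat set" and N :: nat
  assumes fR: "finite R" "card R \<le> k" and fC: "finite C" "card C \<le> k"
  defines "S \<equiv> {1..N} \<times> {1..N}"
  shows "card {x\<in>S \<times> S. \<not> (fst (fst x) \<notin> R \<and> fst (snd x) \<notin> R \<and> snd (fst x) \<notin> C \<and> snd (snd x) \<notin> C
           \<and> fst (fst x) \<noteq> fst (snd x) \<and> snd (fst x) \<noteq> snd (snd x))} \<le> (4*k+2) * N^3"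
proof -
  define B1 where "B1 = (R \<times> {1..N}) \<times> S"
  define B2 where "B2 = S \<times> (R \<times> {1..N})"
  define B3 where "B3 = ({1..N} \<times> C) \<times> S"
  define B4 where "B4 = S \<times> ({1..N} \<times> C)"
  define B5 where "B5 = (\<lambda>(m,n,n'). ((m,n),(m,n'))) ` ({1..N} \<times> {1..N} \<times> {1..N})"
  define B6 where "B6 = (\<lambda>(m,m',n). ((m,n),(m',n))) ` ({1..N} \<times> {1..N} \<times> {1..N})"
  have sub: "{x\<in>S \<times> S. \<not> (fst (fst x) \<notin> R \<and> fst (snd x) \<notin> R \<and> snd (fst x) \<notin> C \<and> snd (snd x) \<notin> C
           \<and> fst (fst x) \<noteq> fst (snd x) \<and> snd (fst x) \<noteq> snd (snd x))} \<subseteq> B1 \<union> B2 \<union> B3 \<union> B4 \<union> B5 \<union> B6"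
  proof
    fix x assume x: "x \<in> {x\<in>S \<times> S. \<not> (fst (fst x) \<notin> R \<and> fst (snd x) \<notin> R \<and> snd (fst x) \<notin> C \<and> snd (snd x) \<notin> C
           \<and> fst (fst x) \<noteq> fst (snd x) \<and> snd (fst x) \<noteq> snd (snd x))}"
    obtain m n m' n' where xe: "x = ((m,n),(m',n'))" by (metis prod.collapse)
    show "x \<in> B1 \<union> B2 \<union> B3 \<union> B4 \<union> B5 \<union> B6"
      using x unfolding xe B1_def B2_def B3_def B4_def B5_def B6_def S_def
      by (auto simp: image_iff)
  qed
  have c1: "card B1 \<le> k * N^3" "card B2 \<le> k * N^3" "card B3 \<le> k * N^3" "card B4 \<le> k * N^3"
    using fR fC by (auto simp: B1_def B2_def B3_def B4_def S_def card_cartesian_product power3_eq_cube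
        intro!: mult_right_mono)
  have c5: "card B5 \<le> N^3" "card B6 \<le> N^3"
    unfolding B5_def B6_def
    by (rule order_trans[OF card_image_le]; simp add: card_cartesian_product power3_eq_cube)+
  have "card (B1 \<union> B2 \<union> B3 \<union> B4 \<union> B5 \<union> B6) \<le> k*N^3 + k*N^3 + k*N^3 + k*N^3 + N^3 + N^3"
    by (intro card_Un_le' c1 c5)
  also have "\<dots> = (4*k+2) * N^3" by (simp add: algebra_simps)
  finally show ?thesis
    by (rule order_trans[OF card_mono[OF _ sub], rotated]) (use fR fC in \<open>simp add: B1_def B2_def B3_def B4_def B5_def B6_def S_def\<close>)
qed




lemma Ind_bounds: "0 \<le> Ind A m n X" "Ind A m n X \<le> 1"
  by (auto simp: Ind_def)

lemma Zf_bounds: assumes "0 \<le> q" "q \<le> 1" shows "0 \<le> Zf q A X" "Zf q A X \<le> 1"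
proof -
  have h: "0 \<le> 1 - q^2" "1 - q^2 \<le> 1" using assms by (auto simp: power_le_one)
  show "0 \<le> Zf q A X" using power_le_one[OF h] by (simp add: Zf_def)
  show "Zf q A X \<le> 1" using h by (simp add: Zf_def)
qed

lemma prob_bound:
  fixes A :: "(nat\<times>nat) set" and q \<epsilon> :: real
  assumes q: "0 \<le> q" "q \<le> 1" and AS: "A \<subseteq> {1..N} \<times> {1..N}" and cA: "card A = k"
    and sc: "scattered A" and N: "N > 0" and e: "\<epsilon> > 0"
  shows "measure_pmf.prob (bern_matrix q N) {X. \<bar>sp_rate N A X - (1 - (1 - q^2) ^ K' A X)\<bar> > \<epsilon>}
    \<le> (4*k+2) / \<epsilon>^2 / real N"
proof -
  define S where "S = {1..N} \<times> {1..N}"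
  define M where "M = bern_matrix q N"
  have fS: "finite S" by (simp add: S_def)
  have fA: "finite A" using AS finite_subset by (metis finite_SigmaI finite_atLeastAtMost)
  have integ[simp]: "integrable (measure_pmf M) (f :: _ \<Rightarrow> real)" for f
    unfolding M_def bern_matrix_def S_def[symmetric] by (rule integrable_Pi_bool[OF fS])
  define d where "d p X = Ind A (fst p) (snd p) X - Zf q A X" for p X
  have cS: "card S = N * N" by (simp add: S_def)
  have step1: "sp_rate N A X - (1 - (1 - q^2) ^ K' A X) = (1 / real N^2) * (\<Sum>p\<in>S. d p X)" for X
  proof -
    have "(\<Sum>m=1..N. \<Sum>n=1..N. (if (\<exists>(i,j)\<in>A. X (m,j) \<and> X (i,j) \<and> X (i,n)) then 1 else 0))
        = (\<Sum>m=1..N. \<Sum>n=1..N. Ind A m n X)" by (simp add: Ind_def)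
    also have "\<dots> = (\<Sum>p\<in>S. Ind A (fst p) (snd p) X)"
      unfolding S_def sum.cartesian_product by (simp add: case_prod_beta)
    finally have e1: "sp_rate N A X = (1 / real N^2) * (\<Sum>p\<in>S. Ind A (fst p) (snd p) X)"
      by (simp add: sp_rate_def)
    have "(\<Sum>p\<in>S. d p X) = (\<Sum>p\<in>S. Ind A (fst p) (snd p) X) - real N^2 * Zf q A X"
      by (simp add: d_def sum_subtractf cS power2_eq_square)
    then show ?thesis using e1 N by (simp add: Zf_def field_simps)
  qed
  define good where "good x \<longleftrightarrow> (fst (fst x) \<notin> fst ` A \<and> fst (snd x) \<notin> fst ` A \<and> snd (fst x) \<notin> snd ` A \<and> snd (snd x) \<notin> snd ` A
           \<and> fst (fst x) \<noteq> fst (snd x) \<and> snd (fst x) \<noteq> snd (snd x))" for x :: "(nat\<times>nat)\<times>(nat\<times>nat)"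
  have Ebound: "measure_pmf.expectation M (\<lambda>X. d p X * d p' X) \<le> (if good (p,p') then 0 else 1)"
    if "p \<in> S" "p' \<in> S" for p p'
  proof (cases "good (p,p')")
    case True
    obtain m n m' n' where pp: "p = (m,n)" "p' = (m',n')" by (cases p, cases p')
    have "measure_pmf.expectation M (\<lambda>X. d p X * d p' X) = 0"
      unfolding M_def d_def pp fst_conv snd_conv
      by (rule good_zero[OF q AS sc]) (use that True in \<open>auto simp: pp good_def S_def\<close>)
    then show ?thesis using True by simp
  next
    case False
    have "d p X * d p' X \<le> 1" for X
    proof -
      have "\<bar>d p X\<bar> \<le> 1" "\<bar>d p' X\<bar> \<le> 1"
        using Ind_bounds[of A "fst p" "snd p" X] Ind_bounds[of A "fst p'" "snd p'" X] Zf_bounds[OF q, of A X]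
        unfolding d_def abs_le_iff by linarith+
      then have "\<bar>d p X * d p' X\<bar> \<le> 1" by (simp add: abs_mult mult_le_one)
      then show ?thesis by simp
    qed
    then have "measure_pmf.expectation M (\<lambda>X. d p X * d p' X) \<le> 1"
      by (intro measure_pmf.integral_le_const integ AE_I2)
    then show ?thesis using False by simp
  qed
  have cR: "finite (fst ` A)" "card (fst ` A) \<le> k" "finite (snd ` A)" "card (snd ` A) \<le> k"
    using fA cA card_image_le by auto
  have cbad: "card {x\<in>S \<times> S. \<not> good x} \<le> (4*k+2) * N^3"
    unfolding good_def S_def by (rule card_bad[OF cR])
  have E2: "measure_pmf.expectation M (\<lambda>X. (\<Sum>p\<in>S. d p X)^2) \<le> (4*k+2) * real N^3"
  proof -
    have "measure_pmf.expectation M (\<lambda>X. (\<Sum>p\<in>S. d p X)^2)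
        = measure_pmf.expectation M (\<lambda>X. \<Sum>p\<in>S. \<Sum>p'\<in>S. d p X * d p' X)"
      by (simp add: power2_eq_square sum_product)
    also have "\<dots> = (\<Sum>p\<in>S. \<Sum>p'\<in>S. measure_pmf.expectation M (\<lambda>X. d p X * d p' X))"
      by (simp add: Bochner_Integration.integral_sum)
    also have "\<dots> \<le> (\<Sum>p\<in>S. \<Sum>p'\<in>S. (if good (p,p') then 0 else 1))"
      by (intro sum_mono Ebound)
    also have "\<dots> = (\<Sum>x\<in>S \<times> S. of_bool (\<not> good x))"
      unfolding sum.cartesian_product by (intro sum.cong refl) auto
    also have "\<dots> = real (card {x\<in>S \<times> S. \<not> good x})"
      using fS by (simp add: Int_def)
    also have "\<dots> \<le> real ((4*k+2) * N^3)"
      using cbad by (simp only: of_nat_le_iff)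
    also have "\<dots> = (4*k+2) * real N^3" by (simp add: algebra_simps)
    finally show ?thesis .
  qed
  define D where "D X = (1 / real N^2) * (\<Sum>p\<in>S. d p X)" for X
  have ED: "measure_pmf.expectation M (\<lambda>X. (D X)^2) \<le> (4*k+2) / real N"
  proof -
    have "measure_pmf.expectation M (\<lambda>X. (D X)^2) = (1 / real N^2)^2 * measure_pmf.expectation M (\<lambda>X. (\<Sum>p\<in>S. d p X)^2)"
      unfolding D_def power_mult_distrib by simp
    also have "\<dots> \<le> (1 / real N^2)^2 * ((4*k+2) * real N^3)"
      by (intro mult_left_mono E2) simp
    also have "\<dots> = (4*k+2) / real N"
      using N by (simp add: field_simps power2_eq_square power3_eq_cube)
    finally show ?thesis .
  qed
  have "measure_pmf.prob M {X. \<bar>sp_rate N A X - (1 - (1 - q^2) ^ K' A X)\<bar> > \<epsilon>}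
      \<le> measure_pmf.prob M {X \<in> space (measure_pmf M). \<epsilon>^2 \<le> (D X)^2}"
  proof (rule measure_pmf.finite_measure_mono)
    show "{X. \<bar>sp_rate N A X - (1 - (1 - q^2) ^ K' A X)\<bar> > \<epsilon>} \<subseteq> {X \<in> space (measure_pmf M). \<epsilon>^2 \<le> (D X)^2}"
    proof
      fix X assume "X \<in> {X. \<bar>sp_rate N A X - (1 - (1 - q^2) ^ K' A X)\<bar> > \<epsilon>}"
      then have "\<epsilon> < \<bar>D X\<bar>" by (simp add: step1 D_def)
      then have "\<epsilon>^2 \<le> \<bar>D X\<bar>^2" using e by (intro power_mono) auto
      then show "X \<in> {X \<in> space (measure_pmf M). \<epsilon>^2 \<le> (D X)^2}" by simp
    qed
  qed simp
  also have "\<dots> \<le> measure_pmf.expectation M (\<lambda>X. (D X)^2) / \<epsilon>^2"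
    by (rule integral_Markov_inequality_measure[where A=UNIV]) (use e in auto)
  also have "\<dots> \<le> ((4*k+2) / real N) / \<epsilon>^2"
    using e ED by (intro divide_right_mono) auto
  also have "\<dots> = (4*k+2) / \<epsilon>^2 / real N" by simp
  finally show ?thesis unfolding M_def by (simp add: add.commute)
qed



theorem lemma3:
  fixes k :: nat and q :: real and phi :: "nat \<Rightarrow> (nat \<times> nat) set"
  assumes q: "0 < q" "q < 1"
    and phi_sub: "\<And>N. N \<ge> k \<Longrightarrow> phi N \<subseteq> {1..N} \<times> {1..N}"
    and phi_card: "\<And>N. N \<ge> k \<Longrightarrow> card (phi N) = k"
    and phi_scat: "\<And>N. N \<ge> k \<Longrightarrow> scattered (phi N)"
  shows "(\<forall>N\<ge>k. map_pmf (K' (phi N)) (bern_matrix q N) = binomial_pmf k q)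
    \<and> (\<forall>\<epsilon>>0. (\<lambda>N. measure_pmf.prob (bern_matrix q N)
          {X. \<bar>sp_rate N (phi N) X - (1 - (1 - q^2) ^ K' (phi N) X)\<bar> > \<epsilon>})
        \<longlonglongrightarrow> 0)"
proof (intro conjI allI impI)
  have q': "0 \<le> q" "q \<le> 1" using q by auto
  show "map_pmf (K' (phi N)) (bern_matrix q N) = binomial_pmf k q" if "N \<ge> k" for N
    by (rule part1[OF q' phi_sub[OF that] phi_card[OF that]])
  fix \<epsilon> :: real assume e: "\<epsilon> > 0"
  define C where "C = (4 * real k + 2) / \<epsilon>^2"
  show "(\<lambda>N. measure_pmf.prob (bern_matrix q N)
          {X. \<bar>sp_rate N (phi N) X - (1 - (1 - q^2) ^ K' (phi N) X)\<bar> > \<epsilon>}) \<longlonglongrightarrow> 0"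
  proof (rule tendsto_sandwich[where f="\<lambda>_. 0" and h="\<lambda>N. C / real N"])
    show "\<forall>\<^sub>F N in sequentially. 0 \<le> measure_pmf.prob (bern_matrix q N)
          {X. \<bar>sp_rate N (phi N) X - (1 - (1 - q^2) ^ K' (phi N) X)\<bar> > \<epsilon>}"
      by simp
    show "\<forall>\<^sub>F N in sequentially. measure_pmf.prob (bern_matrix q N)
          {X. \<bar>sp_rate N (phi N) X - (1 - (1 - q^2) ^ K' (phi N) X)\<bar> > \<epsilon>} \<le> C / real N"
      unfolding eventually_sequentially
    proof (intro exI allI impI)
      fix N assume N: "max k 1 \<le> N"
      then have Nk: "N \<ge> k" and N0: "N > 0" by auto
      show "measure_pmf.prob (bern_matrix q N)
          {X. \<bar>sp_rate N (phi N) X - (1 - (1 - q^2) ^ K' (phi N) X)\<bar> > \<epsilon>} \<le> C / real N"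
        unfolding C_def by (rule prob_bound[OF q' phi_sub[OF Nk] phi_card[OF Nk] phi_scat[OF Nk] N0 e])
    qed
    show "(\<lambda>_. 0::real) \<longlonglongrightarrow> 0" by simp
    show "(\<lambda>N. C / real N) \<longlonglongrightarrow> 0" by (rule lim_const_over_n)
  qed
qed

end
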